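(* For all integers $u,v\ge1$, with $u!=(u,u-1,\ldots,2,1)$ ($0!=\emptyset$) and all universal characters evaluated at $(x,y)$, $$S_{[(u+1)!,(v+1)!]}S_{[(u-1)!,(v-1)!]}-S_{[(u+1)!,(v-1)!]}S_{[(u-1)!,(v+1)!]}+S_{[u!,v!]}^2=0,$$ $$S_{[(u+1)!,(v-1)!]}S_{[(u-1)!,(v+1)!]}-S_{[u!,(v+2,v-1,\ldots,1)]}S_{[(u+2,u-1,\ldots,1),v!]}+S_{[(u+2,u-1,\ldots,1),(v+2,v-1,\ldots,1)]}S_{[u!,v!]}=0.$$
   Context: For $x=(x_1,x_2,\dots)$ define $p_k(x)$ by $\sum_{k\ge0}p_k(x)z^k=\exp(\sum_{k\ge1}x_kz^k)$ and $p_{-k}=0$ for $k>0$; $q_k(y)$ is the same with $y=(y_1,y_2,\dots)$ in place of $x$. For partitions $\lambda=(\lambda_1,\dots,\lambda_l)$, $\mu=(\mu_1,\dots,\mu_{l'})$, the universal character is $S_{[\lambda,\mu]}(x,y)=\det(a_{ij})_{1\le i,j\le l+l'}$ with $a_{ij}=q_{\mu_{l'-i+1}+i-j}(y)$ for $1\le i\le l'$ and $a_{ij}=p_{\lambda_{i-l'}-i+j}(x)$ for $l'+1\le i\le l+l'$. *)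

theory Defs
  imports "HOL-Computational_Algebra.Formal_Power_Series" "Jordan_Normal_Form.Determinant"
begin

text \<open>x = (x_1, x_2, ...) is represented by a function nat => 'a; the value x 0 is ignored.
  The generating series sum_{k>=1} x_k z^k as a formal power series.\<close>
definition gen_series :: "(nat \<Rightarrow> 'a::field_char_0) \<Rightarrow> 'a fps" where
  "gen_series x = Abs_fps (\<lambda>k. if k = 0 then 0 else x k)"

definition schur_p :: "(nat \<Rightarrow> 'a::field_char_0) \<Rightarrow> int \<Rightarrow> 'a" where
  "schur_p x k = (if k < 0 then 0 else fps_nth (fps_exp 1 oo gen_series x) (nat k))"

text \<open>Universal character S_[lambda,mu](x,y), partitions given as lists (weakly decreasing),
  matrix indices 0-based (i0 = i-1, j0 = j-1).\<close>
definition univ_char :: "nat list \<Rightarrow> nat list \<Rightarrow> (nat \<Rightarrow> 'a::field_char_0) \<Rightarrow> (nat \<Rightarrow> 'a) \<Rightarrow> 'a" where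
  "univ_char lam mu x y =
     (let l = length lam; l' = length mu in
      det (mat (l + l') (l + l')
        (\<lambda>(i, j). if i < l'
                  then schur_p y (int (mu ! (l' - i - 1)) + int i - int j)
                  else schur_p x (int (lam ! (i - l')) - int i + int j))))"

definition stair :: "nat \<Rightarrow> nat list" where
  "stair u = rev [1..<u+1]"

definition stair2 :: "nat \<Rightarrow> nat list" where
  "stair2 u = (u + 2) # rev [1..<u]"

end

theory Submission
  imports Defs
begin

definition Dt :: "(nat \<Rightarrow> 'a::comm_ring_1) list \<Rightarrow> 'a" where
  "Dt rs = det (mat (length rs) (length rs) (\<lambda>(i,j). (rs!i) j))"

lemma schur_p_0[simp]: "schur_p x 0 = 1"
  by (simp add: schur_p_def)

lemma schur_p_neg: "k < 0 \<Longrightarrow> schur_p x k = 0"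
  by (simp add: schur_p_def)

lemma Dt_swap: "Dt (xs @ a # b # ys) = - Dt (xs @ b # a # ys)"
proof -
  let ?n = "length (xs @ a # b # ys)"
  let ?k = "length xs"
  have "mat ?n ?n (\<lambda>(i,j). ((xs @ b # a # ys)!i) j) =
        swaprows ?k (Suc ?k) (mat ?n ?n (\<lambda>(i,j). ((xs @ a # b # ys)!i) j))"
    by (rule eq_matI) (auto simp: nth_append nth_Cons split: nat.splits)
  then have "Dt (xs @ b # a # ys) = - Dt (xs @ a # b # ys)"
    unfolding Dt_def by (simp, subst det_swaprows[where n="length (xs @ a # b # ys)"]) auto
  then show ?thesis by simp
qed

lemma Dt_move: "Dt (xs @ r # ys) = (-1)^length xs * Dt (r # xs @ ys)"
proof (induction xs arbitrary: ys rule: rev_induct)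
  case Nil then show ?case by simp
next
  case (snoc x xs)
  have "Dt ((xs @ [x]) @ r # ys) = Dt (xs @ x # r # ys)" by simp
  also have "\<dots> = - Dt (xs @ r # x # ys)" by (rule Dt_swap)
  also have "\<dots> = - ((-1)^length xs * Dt (r # xs @ x # ys))" using snoc by simp
  finally show ?case by simp
qed

lemma Dt_pair: "Dt (xs @ r1 # r2 # ys) = Dt (r1 # r2 # xs @ ys)"
proof -
  have "Dt (xs @ r1 # r2 # ys) = (-1)^length xs * Dt (r1 # xs @ r2 # ys)" by (rule Dt_move)
  also have "Dt (r1 # xs @ r2 # ys) = (-1)^(Suc (length xs)) * Dt (r2 # r1 # xs @ ys)"
    using Dt_move[of "r1 # xs" r2 ys] by simp
  also have "Dt (r2 # r1 # xs @ ys) = - Dt (r1 # r2 # xs @ ys)"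
    using Dt_swap[of "[]" r2 r1 "xs @ ys"] by simp
  finally show ?thesis by (simp add: power_add)
qed

definition Cf :: "(nat \<Rightarrow> 'a::comm_ring_1) list \<Rightarrow> nat \<Rightarrow> 'a" where
  "Cf Y j = (-1)^j * det (mat (length Y) (length Y) (\<lambda>(i,k). (Y!i) (if k < j then k else Suc k)))"

lemma Dt_cons: "Dt (v # Y) = (\<Sum>j<Suc (length Y). v j * Cf Y j)"
proof -
  let ?M = "mat (Suc (length Y)) (Suc (length Y)) (\<lambda>(i,j). ((v # Y)!i) j)"
  have "Dt (v # Y) = det ?M" unfolding Dt_def by simp
  also have "\<dots> = (\<Sum>j<Suc (length Y). ?M $$ (0,j) * cofactor ?M 0 j)"
    by (rule laplace_expansion_row) auto
  also have "\<dots> = (\<Sum>j<Suc (length Y). v j * Cf Y j)"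
  proof (rule sum.cong[OF refl])
    fix j assume j: "j \<in> {..<Suc (length Y)}"
    have "mat_delete ?M 0 j = mat (length Y) (length Y) (\<lambda>(i,k). (Y!i) (if k < j then k else Suc k))"
      by (rule eq_matI) (auto simp: mat_delete_def)
    then show "?M $$ (0,j) * cofactor ?M 0 j = v j * Cf Y j"
      using j by (simp add: cofactor_def Cf_def)
  qed
  finally show ?thesis .
qed

lemma Dt_padL:
  assumes "v 0 = 1" and "\<And>j. j > 0 \<Longrightarrow> v j = 0"
  shows "Dt (v # Y) = Dt (map (\<lambda>r j. r (Suc j)) Y)"
proof -
  have "Dt (v # Y) = (\<Sum>j<Suc (length Y). v j * Cf Y j)" by (rule Dt_cons)
  also have "\<dots> = v 0 * Cf Y 0 + (\<Sum>j<length Y. v (Suc j) * Cf Y (Suc j))"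
    by (rule sum.lessThan_Suc_shift)
  also have "\<dots> = Cf Y 0" using assms by simp
  also have "\<dots> = Dt (map (\<lambda>r j. r (Suc j)) Y)"
    unfolding Cf_def Dt_def by (simp, intro arg_cong[where f=det] eq_matI) auto
  finally show ?thesis .
qed

lemma Dt_padR:
  assumes "v (length Y) = 1" and "\<And>j. j < length Y \<Longrightarrow> v j = 0"
  shows "Dt (Y @ [v]) = Dt Y"
proof -
  let ?n = "length Y"
  let ?M = "mat (Suc ?n) (Suc ?n) (\<lambda>(i,j). ((Y @ [v])!i) j)"
  have "Dt (Y @ [v]) = det ?M" unfolding Dt_def by simp
  also have "\<dots> = (\<Sum>j<Suc ?n. ?M $$ (?n,j) * cofactor ?M ?n j)"
    by (rule laplace_expansion_row) auto
  also have "\<dots> = (\<Sum>j<?n. ?M $$ (?n,j) * cofactor ?M ?n j) + ?M $$ (?n,?n) * cofactor ?M ?n ?n"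
    by simp
  also have "(\<Sum>j<?n. ?M $$ (?n,j) * cofactor ?M ?n j) = 0"
    using assms(2) by (intro sum.neutral) auto
  also have "mat_delete ?M ?n ?n = mat ?n ?n (\<lambda>(i,j). (Y!i) j)"
    by (rule eq_matI) (auto simp: mat_delete_def nth_append)
  then have "?M $$ (?n,?n) * cofactor ?M ?n ?n = Dt Y"
    using assms(1) by (simp add: cofactor_def Dt_def)
  finally show ?thesis by simp
qed

lemma Dt_cramer:
  assumes W: "length W = Suc n" and j: "j < n"
  shows "(\<Sum>i<Suc n. (-1)^i * (W!i) j * Dt (take i W @ drop (Suc i) W)) = 0"
proof -
  let ?B = "mat (Suc n) (Suc n) (\<lambda>(i,k). (W!i) (if k < n then k else j))"
  have B: "?B \<in> carrier_mat (Suc n) (Suc n)" by simp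
  have d0: "det ?B = 0"
    by (rule det_identical_columns[OF B, of j n]) (use j in \<open>auto intro!: eq_vecI\<close>)
  have d1: "det ?B = (\<Sum>i<Suc n. ?B $$ (i,n) * cofactor ?B i n)"
    by (rule laplace_expansion_column[OF B]) simp
  have d2: "(\<Sum>i<Suc n. ?B $$ (i,n) * cofactor ?B i n)
     = (-1)^n * (\<Sum>i<Suc n. (-1)^i * (W!i) j * Dt (take i W @ drop (Suc i) W))"
    unfolding sum_distrib_left
  proof (rule sum.cong[OF refl])
    fix i assume i: "i \<in> {..<Suc n}"
    have len: "length (take i W @ drop (Suc i) W) = n" using i W by auto
    have "mat_delete ?B i n = mat n n (\<lambda>(i',k). ((take i W @ drop (Suc i) W)!i') k)"
      by (rule eq_matI) (use i W in \<open>auto simp: mat_delete_def nth_append min_def\<close>)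
    then have "det (mat_delete ?B i n) = Dt (take i W @ drop (Suc i) W)"
      unfolding Dt_def len by simp
    then show "?B $$ (i,n) * cofactor ?B i n = (-1)^n * ((-1)^i * (W!i) j * Dt (take i W @ drop (Suc i) W))"
      using i by (simp add: cofactor_def power_add)
  qed
  have e: "(-1)^n * (\<Sum>i<Suc n. (-1)^i * (W!i) j * Dt (take i W @ drop (Suc i) W)) = 0"
    using d0 d1 d2 by (simp only:)
  have o: "(-1::'a)^n * (-1)^n = 1" by (induct n) auto
  have "(\<Sum>i<Suc n. (-1)^i * (W!i) j * Dt (take i W @ drop (Suc i) W)) = 
     ((-1)^n * (-1)^n) * (\<Sum>i<Suc n. (-1)^i * (W!i) j * Dt (take i W @ drop (Suc i) W))"
    by (simp only: o mult_1)
  also have "\<dots> = (-1)^n * ((-1)^n * (\<Sum>i<Suc n. (-1)^i * (W!i) j * Dt (take i W @ drop (Suc i) W)))"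
    by (rule mult.assoc)
  also have "\<dots> = 0" by (simp only: e mult_zero_right)
  finally show ?thesis .
qed

lemma Dt_rep0:
  assumes "k < length X"
  shows "Dt (X!k # d # X) = 0"
proof -
  let ?L = "X!k # d # X"
  let ?M = "mat (length ?L) (length ?L) (\<lambda>(i,j). (?L!i) j)"
  have "det ?M = 0"
    by (rule det_identical_rows[of ?M "length ?L" 0 "k+2"]) (use assms in \<open>auto intro!: eq_vecI\<close>)
  then show ?thesis unfolding Dt_def .
qed

lemma plucker:
  "Dt (a#b#X) * Dt (c#d#X) - Dt (a#c#X) * Dt (b#d#X) + Dt (a#d#X) * Dt (b#c#X) = 0"
proof -
  define n where "n = length X + 2"
  define W where "W = a#b#c#X"
  have W: "length W = Suc n" unfolding W_def n_def by simp
  define f where "f i = (-1)^i * Dt (take i W @ drop (Suc i) W) * Dt (W!i # d # X)" for i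
  have phi: "Dt (v # d # X) = (\<Sum>j<n. v j * Cf (d#X) j)" for v
    using Dt_cons[of v "d#X"] unfolding n_def by simp
  have "(\<Sum>i<Suc n. f i) = (\<Sum>i<Suc n. \<Sum>j<n. Cf (d#X) j * ((-1)^i * (W!i) j * Dt (take i W @ drop (Suc i) W)))"
    unfolding f_def phi sum_distrib_left by (intro sum.cong refl) (simp add: algebra_simps)
  also have "\<dots> = (\<Sum>j<n. Cf (d#X) j * (\<Sum>i<Suc n. (-1)^i * (W!i) j * Dt (take i W @ drop (Suc i) W)))"
    unfolding sum_distrib_left by (rule sum.swap)
  also have "\<dots> = 0" using Dt_cramer[OF W] by simp
  finally have S: "(\<Sum>i<Suc n. f i) = 0" .
  have sn: "Suc n = Suc (Suc (Suc (length X)))" by (simp add: n_def)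
  have "(\<Sum>i<Suc n. f i) = f 0 + (f (Suc 0) + (f (Suc (Suc 0)) + (\<Sum>i<length X. f (Suc (Suc (Suc i))))))"
    unfolding sn sum.lessThan_Suc_shift ..
  also have "(\<Sum>i<length X. f (Suc (Suc (Suc i)))) = 0"
    by (intro sum.neutral) (auto simp: f_def W_def numeral_3_eq_3 Dt_rep0)
  finally have "f 0 + f (Suc 0) + f (Suc (Suc 0)) = 0" using S by (simp add: add.assoc)
  then show ?thesis
    by (simp add: f_def W_def numeral_2_eq_2 algebra_simps)
qed

definition qr :: "(nat \<Rightarrow> 'a::field_char_0) \<Rightarrow> int \<Rightarrow> nat \<Rightarrow> 'a" where
  "qr y a = (\<lambda>j. schur_p y (a - int j))"
definition pr :: "(nat \<Rightarrow> 'a::field_char_0) \<Rightarrow> int \<Rightarrow> nat \<Rightarrow> 'a" where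
  "pr x b = (\<lambda>j. schur_p x (b + int j))"
definition QL :: "(nat \<Rightarrow> 'a::field_char_0) \<Rightarrow> int \<Rightarrow> nat \<Rightarrow> (nat \<Rightarrow> 'a) list" where
  "QL y s n = map (\<lambda>i. qr y (s + 2 * int i)) [0..<n]"
definition PL :: "(nat \<Rightarrow> 'a::field_char_0) \<Rightarrow> int \<Rightarrow> nat \<Rightarrow> (nat \<Rightarrow> 'a) list" where
  "PL x s n = map (\<lambda>k. pr x (s - 2 * int k)) [0..<n]"

lemma length_QL[simp]: "length (QL y s n) = n" by (simp add: QL_def)
lemma length_PL[simp]: "length (PL x s n) = n" by (simp add: PL_def)

lemma QL_snoc: "QL y s (Suc n) = QL y s n @ [qr y (s + 2 * int n)]"
  by (simp add: QL_def)
lemma PL_snoc: "PL x s (Suc n) = PL x s n @ [pr x (s - 2 * int n)]"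
  by (simp add: PL_def)
lemma QL_cons: "QL y s (Suc n) = qr y s # QL y (s + 2) n"
  unfolding QL_def by (induct n) (auto simp: algebra_simps)
lemma PL_cons: "PL x s (Suc n) = pr x s # PL x (s - 2) n"
  unfolding PL_def by (induct n) (auto simp: algebra_simps)

lemma sh_QL: "map (\<lambda>r j. r (Suc j)) (QL y s n) = QL y (s - 1) n"
  unfolding QL_def qr_def by (auto simp: algebra_simps)
lemma sh_PL: "map (\<lambda>r j. r (Suc j)) (PL x s n) = PL x (s + 1) n"
  unfolding PL_def pr_def by (auto simp: algebra_simps)

lemma padL: "Dt (qr y 0 # Y) = Dt (map (\<lambda>r j. r (Suc j)) Y)"
  by (rule Dt_padL) (auto simp: qr_def schur_p_neg)

lemma padR: "Dt (Y @ [pr x (- int (length Y))]) = Dt Y"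
  by (rule Dt_padR) (auto simp: pr_def schur_p_neg)

lemma univ_gen: "univ_char lam mu x y =
   Dt (map (\<lambda>i. qr y (int (mu!(length mu - i - 1)) + int i)) [0..<length mu] @
       map (\<lambda>k. pr x (int (lam!k) - int (length mu) - int k)) [0..<length lam])"
  unfolding univ_char_def Dt_def Let_def
  by (simp, intro arg_cong[where f=det] eq_matI) (auto simp: nth_append qr_def pr_def algebra_simps)

lemma stair_len[simp]: "length (stair u) = u" by (simp add: stair_def)
lemma stair_nth: "k < u \<Longrightarrow> stair u ! k = u - k"
  unfolding stair_def by (subst rev_nth) (auto simp del: upt_Suc)

lemma Qstair: "map (\<lambda>i. qr y (int (stair m!(length (stair m) - i - 1)) + int i)) [0..<length (stair m)] = QL y 1 m"
  unfolding QL_def by (auto simp: stair_nth algebra_simps)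

lemma Pstair: "map (\<lambda>k. pr x (int (stair u!k) - int l - int k)) [0..<length (stair u)] = PL x (int u - int l) u"
  unfolding PL_def by (auto simp: stair_nth algebra_simps)

lemma stair2_len[simp]: "length (stair2 (Suc m)) = Suc m" by (simp add: stair2_def)

lemma Qstair2: "map (\<lambda>i. qr y (int (stair2 (Suc m)!(length (stair2 (Suc m)) - i - 1)) + int i)) [0..<length (stair2 (Suc m))]
   = QL y 1 m @ [qr y (2 * int m + 3)]"
proof -
  have "map (\<lambda>i. qr y (int (stair2 (Suc m)!(Suc m - i - 1)) + int i)) [0..<Suc m] = 
     map (\<lambda>i. qr y (int (stair2 (Suc m)!(Suc m - i - 1)) + int i)) [0..<m] @ [qr y (int (stair2 (Suc m)!0) + int m)]"
    by simp
  also have "map (\<lambda>i. qr y (int (stair2 (Suc m)!(Suc m - i - 1)) + int i)) [0..<m] = QL y 1 m"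
    unfolding QL_def
  proof (rule map_cong[OF refl])
    fix i assume "i \<in> set [0..<m]"
    then have i: "i < m" by simp
    then have "stair2 (Suc m) ! (Suc m - i - 1) = rev [1..<Suc m] ! (m - i - 1)"
      by (simp add: stair2_def Suc_diff_Suc)
    also have "\<dots> = Suc i" using i by (subst rev_nth) (auto simp del: upt_Suc)
    finally show "qr y (int (stair2 (Suc m)!(Suc m - i - 1)) + int i) = qr y (1 + 2 * int i)"
      by (simp add: algebra_simps)
  qed
  finally have eq: "map (\<lambda>i. qr y (int (stair2 (Suc m)!(Suc m - i - 1)) + int i)) [0..<Suc m] = 
     QL y 1 m @ [qr y (int (stair2 (Suc m)!0) + int m)]" .
  have "stair2 (Suc m) ! 0 = Suc m + 2" by (simp only: stair2_def nth_Cons_0)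
  then have "int (stair2 (Suc m)!0) + int m = 2 * int m + 3" by simp
  then show ?thesis using eq by (simp only: stair2_len)
qed

lemma Pstair2: "map (\<lambda>k. pr x (int (stair2 (Suc u)!k) - int l - int k)) [0..<length (stair2 (Suc u))]
   = pr x (int u + 3 - int l) # PL x (int u - 1 - int l) u"
proof -
  have "[0..<Suc u] = 0 # map Suc [0..<u]" by (simp add: map_Suc_upt upt_conv_Cons)
  then have "map (\<lambda>k. pr x (int (stair2 (Suc u)!k) - int l - int k)) [0..<length (stair2 (Suc u))]
     = pr x (int (stair2 (Suc u)!0) - int l) # map (\<lambda>k. pr x (int (stair2 (Suc u)! Suc k) - int l - int (Suc k))) [0..<u]"
    by simp
  also have "map (\<lambda>k. pr x (int (stair2 (Suc u)! Suc k) - int l - int (Suc k))) [0..<u] = PL x (int u - 1 - int l) u"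
    unfolding PL_def
  proof (rule map_cong[OF refl])
    fix k assume "k \<in> set [0..<u]"
    then have k: "k < u" by simp
    have "stair2 (Suc u) ! Suc k = rev [1..<Suc u] ! k"
      by (simp only: stair2_def nth_Cons_Suc)
    also have "\<dots> = u - k" using k by (subst rev_nth) (auto simp del: upt_Suc)
    finally have "stair2 (Suc u) ! Suc k = u - k" .
    then show "pr x (int (stair2 (Suc u)! Suc k) - int l - int (Suc k)) = pr x (int u - 1 - int l - 2 * int k)"
      using k by (simp add: algebra_simps of_nat_diff)
  qed
  finally show ?thesis by (simp add: stair2_def algebra_simps)
qed

lemma US: "univ_char (stair u) (stair m) x y = Dt (QL y 1 m @ PL x (int u - int m) u)"
  unfolding univ_gen unfolding Qstair unfolding Pstair unfolding stair_len ..

lemma U2L: "univ_char (stair2 (Suc u)) (stair m) x y = Dt (QL y 1 m @ pr x (int u + 3 - int m) # PL x (int u - 1 - int m) u)"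
  unfolding univ_gen unfolding Qstair unfolding Pstair2 unfolding stair_len ..

lemma U2R: "univ_char (stair u) (stair2 (Suc m)) x y = Dt ((QL y 1 m @ [qr y (2 * int m + 3)]) @ PL x (int u - int (Suc m)) u)"
  unfolding univ_gen unfolding Qstair2 unfolding Pstair unfolding stair2_len ..

lemma U22: "univ_char (stair2 (Suc u)) (stair2 (Suc m)) x y = Dt ((QL y 1 m @ [qr y (2 * int m + 3)]) @ pr x (int u + 3 - int (Suc m)) # PL x (int u - 1 - int (Suc m)) u)"
  unfolding univ_gen unfolding Qstair2 unfolding Pstair2 unfolding stair2_len ..

lemma padR2: "s = - int (length A + length B) \<Longrightarrow> Dt (A @ B @ [pr x s]) = Dt (A @ B)"
  using padR[of "A @ B" x] by simp

lemma ident2: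
  fixes x y :: "nat \<Rightarrow> 'a::field_char_0"
  shows "univ_char (stair (Suc u' + 1)) (stair (Suc v' - 1)) x y * univ_char (stair (Suc u' - 1)) (stair (Suc v' + 1)) x y
         - univ_char (stair (Suc u')) (stair2 (Suc v')) x y * univ_char (stair2 (Suc u')) (stair (Suc v')) x y
         + univ_char (stair2 (Suc u')) (stair2 (Suc v')) x y * univ_char (stair (Suc u')) (stair (Suc v')) x y = 0"
proof -
  define Y where "Y = QL y 1 v'"
  define Z where "Z = PL x (int u' - int v' - 2) u'"
  define al where "al = qr y (2 * int v' + 1)"
  define be where "be = qr y (2 * int v' + 3)"
  define ga where "ga = pr x (int u' - int v' + 2)"
  define de where "de = pr x (int u' - int v')"
  have T3: "univ_char (stair (Suc u' + 1)) (stair (Suc v' - 1)) x y = Dt (ga # de # Y @ Z)"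
  proof -
    have "univ_char (stair (Suc u' + 1)) (stair (Suc v' - 1)) x y = Dt (Y @ ga # de # Z)"
      by (simp add: US PL_cons Y_def Z_def ga_def de_def algebra_simps)
    then show ?thesis by (simp add: Dt_pair)
  qed
  have T4: "univ_char (stair (Suc u' - 1)) (stair (Suc v' + 1)) x y = Dt (al # be # Y @ Z)"
  proof -
    have "univ_char (stair (Suc u' - 1)) (stair (Suc v' + 1)) x y = Dt (Y @ al # be # Z)"
      by (simp add: US QL_snoc Y_def Z_def al_def be_def algebra_simps)
    then show ?thesis by (simp add: Dt_pair)
  qed
  have U1: "univ_char (stair (Suc u')) (stair2 (Suc v')) x y = Dt (be # de # Y @ Z)"
  proof -
    have "univ_char (stair (Suc u')) (stair2 (Suc v')) x y = Dt (Y @ be # de # Z)"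
      by (simp add: U2R PL_cons Y_def Z_def be_def de_def algebra_simps)
    then show ?thesis by (simp add: Dt_pair)
  qed
  have U2: "univ_char (stair2 (Suc u')) (stair (Suc v')) x y = Dt (al # ga # Y @ Z)"
  proof -
    have "univ_char (stair2 (Suc u')) (stair (Suc v')) x y = Dt (Y @ al # ga # Z)"
      by (simp add: U2L QL_snoc Y_def Z_def al_def ga_def algebra_simps)
    then show ?thesis by (simp add: Dt_pair)
  qed
  have U3: "univ_char (stair2 (Suc u')) (stair2 (Suc v')) x y = Dt (be # ga # Y @ Z)"
  proof -
    have "univ_char (stair2 (Suc u')) (stair2 (Suc v')) x y = Dt (Y @ be # ga # Z)"
      by (simp add: U22 Y_def Z_def be_def ga_def algebra_simps)
    then show ?thesis by (simp add: Dt_pair)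
  qed
  have T5: "univ_char (stair (Suc u')) (stair (Suc v')) x y = Dt (al # de # Y @ Z)"
  proof -
    have "univ_char (stair (Suc u')) (stair (Suc v')) x y = Dt (Y @ al # de # Z)"
      by (simp add: US QL_snoc PL_cons Y_def Z_def al_def de_def algebra_simps)
    then show ?thesis by (simp add: Dt_pair)
  qed
  show ?thesis unfolding T3 T4 U1 U2 U3 T5
    using plucker[of al be "Y @ Z" ga de] by (simp add: algebra_simps)
qed

lemma ident1:
  fixes x y :: "nat \<Rightarrow> 'a::field_char_0"
  shows "univ_char (stair (Suc u' + 1)) (stair (Suc v' + 1)) x y * univ_char (stair (Suc u' - 1)) (stair (Suc v' - 1)) x y
         - univ_char (stair (Suc u' + 1)) (stair (Suc v' - 1)) x y * univ_char (stair (Suc u' - 1)) (stair (Suc v' + 1)) x y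
         + (univ_char (stair (Suc u')) (stair (Suc v')) x y)^2 = 0"
proof -
  define Z where "Z = PL x (int u' - int v' - 2) (Suc u')"
  define X where "X = QL y 1 (Suc v') @ Z"
  define a where "a = pr x (int u' - int v')"
  define b where "b = qr y (2 * int v' + 3)"
  define c where "c = qr y 0"
  define d where "d = pr x (- (int u' + int v' + 3))"
  define s where "s = (-1::'a)^(u'+v'+3)"
  define e where "e = (-1::'a)^(v'+2)"
  have ee: "e * e = 1" unfolding e_def by (induct v') auto
  have T1: "univ_char (stair (Suc u' + 1)) (stair (Suc v' + 1)) x y = - Dt (a # b # X)"
  proof -
    have "univ_char (stair (Suc u' + 1)) (stair (Suc v' + 1)) x y = Dt (QL y 1 (Suc v') @ b # a # Z)"
      by (simp add: US QL_snoc PL_cons Z_def a_def b_def algebra_simps)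
    also have "\<dots> = Dt (b # a # X)" by (simp add: Dt_pair X_def)
    also have "\<dots> = - Dt (a # b # X)" using Dt_swap[of "[]" a b X] by simp
    finally show ?thesis .
  qed
  have T2: "univ_char (stair (Suc u' - 1)) (stair (Suc v' - 1)) x y = s * (- Dt (c # d # X))"
  proof -
    have "Dt (c # X @ [d]) = Dt ((c # X) @ [d])" by simp
    also have "\<dots> = Dt (c # X)" 
      using padR[of "c # X" x] by (simp add: d_def X_def Z_def algebra_simps)
    also have "\<dots> = Dt (QL y 0 (Suc v') @ PL x (int u' - int v' - 1) (Suc u'))"
      by (simp add: padL c_def X_def Z_def sh_QL sh_PL algebra_simps)
    also have "\<dots> = Dt (qr y 0 # QL y 2 v' @ PL x (int u' - int v' - 1) (Suc u'))"
      by (simp add: QL_cons)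
    also have "\<dots> = Dt (QL y 1 v' @ PL x (int u' - int v') (Suc u'))"
      by (simp add: padL sh_QL sh_PL algebra_simps)
    also have "\<dots> = Dt (QL y 1 v' @ PL x (int u' - int v') u' @ [pr x (int u' - int v' - 2 * int u')])"
      by (simp add: PL_snoc)
    also have "\<dots> = Dt (QL y 1 v' @ PL x (int u' - int v') u')"
      by (rule padR2) simp
    also have "\<dots> = univ_char (stair (Suc u' - 1)) (stair (Suc v' - 1)) x y"
      by (simp add: US)
    finally have A: "Dt (c # X @ [d]) = univ_char (stair (Suc u' - 1)) (stair (Suc v' - 1)) x y" .
    have "Dt (c # X @ [d]) = (-1)^(length (c # X)) * Dt (d # c # X)"
      using Dt_move[of "c # X" d "[]"] by simp
    also have "length (c # X) = u' + v' + 3" by (simp add: X_def Z_def)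
    also have "Dt (d # c # X) = - Dt (c # d # X)" using Dt_swap[of "[]" c d X] by simp
    finally show ?thesis using A by (simp add: s_def)
  qed
  have T3: "univ_char (stair (Suc u' + 1)) (stair (Suc v' - 1)) x y = e * Dt (a # c # X)"
  proof -
    have "Dt (c # QL y 1 (Suc v') @ a # Z) = Dt (c # QL y 1 (Suc v') @ PL x (int u' - int v') (Suc (Suc u')))"
      by (simp add: PL_cons a_def Z_def)
    also have "\<dots> = Dt (QL y 0 (Suc v') @ PL x (int u' - int v' + 1) (Suc (Suc u')))"
      by (simp add: padL c_def sh_QL sh_PL algebra_simps)
    also have "\<dots> = Dt (qr y 0 # QL y 2 v' @ PL x (int u' - int v' + 1) (Suc (Suc u')))"
      by (simp add: QL_cons)
    also have "\<dots> = Dt (QL y 1 v' @ PL x (int u' - int v' + 2) (Suc (Suc u')))"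
      by (simp add: padL sh_QL sh_PL algebra_simps)
    also have "\<dots> = univ_char (stair (Suc u' + 1)) (stair (Suc v' - 1)) x y"
      by (simp add: US algebra_simps)
    finally have A: "Dt (c # QL y 1 (Suc v') @ a # Z) = univ_char (stair (Suc u' + 1)) (stair (Suc v' - 1)) x y" .
    have "Dt ((c # QL y 1 (Suc v')) @ a # Z) = (-1)^(length (c # QL y 1 (Suc v'))) * Dt (a # (c # QL y 1 (Suc v')) @ Z)"
      by (rule Dt_move)
    then show ?thesis using A by (simp add: e_def X_def)
  qed
  have T4: "univ_char (stair (Suc u' - 1)) (stair (Suc v' + 1)) x y = s * (e * Dt (b # d # X))"
  proof -
    have "Dt (QL y 1 (Suc v') @ b # Z @ [d]) = Dt (QL y 1 (Suc (Suc v')) @ Z @ [d])"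
      by (simp add: QL_snoc b_def algebra_simps)
    also have "\<dots> = Dt (QL y 1 (Suc (Suc v')) @ Z)"
      unfolding d_def by (rule padR2) (simp add: Z_def)
    also have "\<dots> = Dt (QL y 1 (Suc (Suc v')) @ PL x (int u' - int v' - 2) u' @ [pr x (int u' - int v' - 2 - 2 * int u')])"
      by (simp add: Z_def PL_snoc)
    also have "\<dots> = Dt (QL y 1 (Suc (Suc v')) @ PL x (int u' - int v' - 2) u')"
      by (rule padR2) simp
    also have "\<dots> = univ_char (stair (Suc u' - 1)) (stair (Suc v' + 1)) x y"
      by (simp add: US algebra_simps)
    finally have A: "Dt (QL y 1 (Suc v') @ b # Z @ [d]) = univ_char (stair (Suc u' - 1)) (stair (Suc v' + 1)) x y" .
    have M1: "Dt ((QL y 1 (Suc v') @ b # Z) @ [d]) = (-1)^(length (QL y 1 (Suc v') @ b # Z)) * Dt (d # QL y 1 (Suc v') @ b # Z)"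
      using Dt_move[of "QL y 1 (Suc v') @ b # Z" d "[]"] by simp
    have L: "length (QL y 1 (Suc v') @ b # Z) = u' + v' + 3" by (simp add: Z_def)
    have M2: "Dt ((d # QL y 1 (Suc v')) @ b # Z) = (-1)^(length (d # QL y 1 (Suc v'))) * Dt (b # (d # QL y 1 (Suc v')) @ Z)"
      by (rule Dt_move)
    show ?thesis using A M1 M2 L by (simp add: s_def e_def X_def power_add)
  qed
  have T5a: "univ_char (stair (Suc u')) (stair (Suc v')) x y = s * (e * Dt (a # d # X))"
  proof -
    have "Dt (QL y 1 (Suc v') @ a # Z @ [d]) = Dt (QL y 1 (Suc v') @ PL x (int u' - int v') (Suc (Suc u')) @ [d])"
      by (simp add: PL_cons a_def Z_def)
    also have "\<dots> = Dt (QL y 1 (Suc v') @ PL x (int u' - int v') (Suc (Suc u')))"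
      unfolding d_def by (rule padR2) simp
    also have "\<dots> = Dt (QL y 1 (Suc v') @ PL x (int u' - int v') (Suc u') @ [pr x (int u' - int v' - 2 * int (Suc u'))])"
      by (simp only: PL_snoc)
    also have "\<dots> = Dt (QL y 1 (Suc v') @ PL x (int u' - int v') (Suc u'))"
      by (rule padR2) simp
    also have "\<dots> = univ_char (stair (Suc u')) (stair (Suc v')) x y"
      by (simp add: US algebra_simps)
    finally have A: "Dt (QL y 1 (Suc v') @ a # Z @ [d]) = univ_char (stair (Suc u')) (stair (Suc v')) x y" .
    have M1: "Dt ((QL y 1 (Suc v') @ a # Z) @ [d]) = (-1)^(length (QL y 1 (Suc v') @ a # Z)) * Dt (d # QL y 1 (Suc v') @ a # Z)"
      using Dt_move[of "QL y 1 (Suc v') @ a # Z" d "[]"] by simp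
    have L: "length (QL y 1 (Suc v') @ a # Z) = u' + v' + 3" by (simp add: Z_def)
    have M2: "Dt ((d # QL y 1 (Suc v')) @ a # Z) = (-1)^(length (d # QL y 1 (Suc v'))) * Dt (a # (d # QL y 1 (Suc v')) @ Z)"
      by (rule Dt_move)
    show ?thesis using A M1 M2 L by (simp add: s_def e_def X_def power_add)
  qed
  have T5b: "univ_char (stair (Suc u')) (stair (Suc v')) x y = e * Dt (b # c # X)"
  proof -
    have "Dt (c # QL y 1 (Suc v') @ b # Z) = Dt (c # QL y 1 (Suc (Suc v')) @ Z)"
      by (simp add: QL_snoc b_def algebra_simps)
    also have "\<dots> = Dt (QL y 0 (Suc (Suc v')) @ PL x (int u' - int v' - 1) (Suc u'))"
      by (simp add: padL c_def Z_def sh_QL sh_PL algebra_simps)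
    also have "\<dots> = Dt (qr y 0 # QL y 2 (Suc v') @ PL x (int u' - int v' - 1) (Suc u'))"
      by (simp only: QL_cons) simp
    also have "\<dots> = Dt (QL y 1 (Suc v') @ PL x (int u' - int v') (Suc u'))"
      by (simp add: padL sh_QL sh_PL algebra_simps)
    also have "\<dots> = univ_char (stair (Suc u')) (stair (Suc v')) x y"
      by (simp add: US algebra_simps)
    finally have A: "Dt (c # QL y 1 (Suc v') @ b # Z) = univ_char (stair (Suc u')) (stair (Suc v')) x y" .
    have "Dt ((c # QL y 1 (Suc v')) @ b # Z) = (-1)^(length (c # QL y 1 (Suc v'))) * Dt (b # (c # QL y 1 (Suc v')) @ Z)"
      by (rule Dt_move)
    then show ?thesis using A by (simp add: e_def X_def)
  qed
  have sq: "(univ_char (stair (Suc u')) (stair (Suc v')) x y)^2 = (s * (e * Dt (a # d # X))) * (e * Dt (b # c # X))"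
    using T5a T5b by (metis power2_eq_square)
  have "univ_char (stair (Suc u' + 1)) (stair (Suc v' + 1)) x y * univ_char (stair (Suc u' - 1)) (stair (Suc v' - 1)) x y
         - univ_char (stair (Suc u' + 1)) (stair (Suc v' - 1)) x y * univ_char (stair (Suc u' - 1)) (stair (Suc v' + 1)) x y
         + (univ_char (stair (Suc u')) (stair (Suc v')) x y)^2
      = s * (Dt (a#b#X) * Dt (c#d#X) - (e*e) * (Dt (a#c#X) * Dt (b#d#X)) + (e*e) * (Dt (a#d#X) * Dt (b#c#X)))"
    unfolding sq T1 T2 T3 T4 by (simp add: algebra_simps)
  also have "\<dots> = 0" using plucker[of a b X c d] by (simp add: ee)
  finally show ?thesis .
qed

theorem lemma4p7:
  fixes x y :: "nat \<Rightarrow> 'a::field_char_0" and u v :: nat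
  assumes "u \<ge> 1" and "v \<ge> 1"
  shows "univ_char (stair (u+1)) (stair (v+1)) x y * univ_char (stair (u-1)) (stair (v-1)) x y
         - univ_char (stair (u+1)) (stair (v-1)) x y * univ_char (stair (u-1)) (stair (v+1)) x y
         + (univ_char (stair u) (stair v) x y)^2 = 0
     \<and> univ_char (stair (u+1)) (stair (v-1)) x y * univ_char (stair (u-1)) (stair (v+1)) x y
         - univ_char (stair u) (stair2 v) x y * univ_char (stair2 u) (stair v) x y
         + univ_char (stair2 u) (stair2 v) x y * univ_char (stair u) (stair v) x y = 0"
proof -
  obtain u' where u: "u = Suc u'" using assms(1) by (cases u) auto
  obtain v' where v: "v = Suc v'" using assms(2) by (cases v) auto
  show ?thesis unfolding u v by (rule conjI[OF ident1 ident2])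
qed

end
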